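(* Let $\varepsilon>0$ and $K=\lceil 3mn/\varepsilon\rceil$. Let items $g_{ji}\in M$ (ordered pairs $j\ne i$) be given and let $\mathcal{A}=(A_1,\dots,A_n)$ be an allocation of $M$ with $g_{ji}\in A_j$ for all $j\ne i$. If the allocation $\mathcal{A}'=(A_1\cup\{d_1\},\dots,A_n\cup\{d_n\})$ is envy-free with respect to the rounded valuations $\overline v_1,\dots,\overline v_n$ (i.e. $\overline v_i(A_i\cup\{d_i\})\ge\overline v_i(A_j\cup\{d_j\})$ for all $i\ne j$), then for all $i\ne j$, $v_i(A_i)\ge(1-\varepsilon)\,v_i(A_j\setminus\{g_{ji}\})$; in particular $\mathcal{A}$ is $(1-\varepsilon)$-approximate EF1 with respect to $v_1,\dots,v_n$.
   Context: Agents $[n]$, items $M=[m]$, additive valuations $v_i$. For $\alpha\in(0,1]$, an allocation is $\alpha$-approximate EF1 if for all $i\ne j$ with $A_j\ne\emptyset$ there exists $g\in A_j$ with $v_i(A_i)\ge\alpha\,v_i(A_j\setminus\{g\})$. Rounded instance: given integer $K\ge1$ and items $g_{ji}\in M$ for ordered pairs $j\ne i$, let $Y_i=\{g_{ji}: j\ne i\}$, $V_i=v_i(M\setminus Y_i)$, $\tau_i=V_i/K$. Define additive $\overline v_i$ on $M\cup\{d_1,\dots,d_n\}$ ($d_1,\dots,d_n$ new dummy items): for $o\in M\setminus Y_i$, $\overline v_i(o)=\max\{k\tau_i:k\in\mathbb{Z}_{\ge0},\,k\tau_i\le v_i(o)\}$ (and $\overline v_i(o)=0$ if $\tau_i=0$);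 $\overline v_i(o)=0$ for $o\in Y_i$; $\overline v_i(d_i)=m\tau_i$ and $\overline v_i(d_j)=0$ for $j\ne i$. *)

theory Defs
  imports Complex_Main
begin

text \<open>Valuations v :: nat => 'm => real are additive: v i applied to a set S is sum (v i) S.
  The rounded instance lives on items of type 'm + nat: Inl o is the real item o,
  Inr j is the dummy item d_j.\<close>

definition Ygoods :: "nat \<Rightarrow> (nat \<Rightarrow> nat \<Rightarrow> 'm) \<Rightarrow> nat \<Rightarrow> 'm set" where
  "Ygoods n g i = {g j i | j. j < n \<and> j \<noteq> i}"

definition tau :: "nat \<Rightarrow> 'm set \<Rightarrow> (nat \<Rightarrow> 'm \<Rightarrow> real) \<Rightarrow> (nat \<Rightarrow> nat \<Rightarrow> 'm) \<Rightarrow> nat \<Rightarrow> nat \<Rightarrow> real" where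
  "tau n M v g K i = sum (v i) (M - Ygoods n g i) / real K"

definition vbar :: "nat \<Rightarrow> 'm set \<Rightarrow> (nat \<Rightarrow> 'm \<Rightarrow> real) \<Rightarrow> (nat \<Rightarrow> nat \<Rightarrow> 'm) \<Rightarrow> nat
    \<Rightarrow> nat \<Rightarrow> 'm + nat \<Rightarrow> real" where
  "vbar n M v g K i x =
     (let t = tau n M v g K i in
      case x of
        Inl y \<Rightarrow> (if y \<in> Ygoods n g i then 0
                  else if t = 0 then 0
                  else Max {real k * t | k :: nat. real k * t \<le> v i y})
      | Inr j \<Rightarrow> (if j = i then real (card M) * t else 0))"

definition approx_EF1 :: "nat \<Rightarrow> (nat \<Rightarrow> 'm \<Rightarrow> real) \<Rightarrow> real \<Rightarrow> (nat \<Rightarrow> 'm set) \<Rightarrow> bool" where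
  "approx_EF1 n v \<alpha> A \<longleftrightarrow>
     (\<forall>i<n. \<forall>j<n. i \<noteq> j \<longrightarrow> A j \<noteq> {} \<longrightarrow>
        (\<exists>x\<in>A j. sum (v i) (A i) \<ge> \<alpha> * sum (v i) (A j - {x})))"

definition is_allocation :: "nat \<Rightarrow> 'm set \<Rightarrow> (nat \<Rightarrow> 'm set) \<Rightarrow> bool" where
  "is_allocation n M A \<longleftrightarrow>
     (\<forall>i<n. A i \<subseteq> M) \<and> (\<Union>i<n. A i) = M \<and>
     (\<forall>i<n. \<forall>j<n. i \<noteq> j \<longrightarrow> A i \<inter> A j = {})"

end

theory Submission
  imports Defs
begin

lemma max_bounds:
  fixes t x :: real assumes t: "t > 0" and x: "x \<ge> 0"
  shows "Max {real k * t | k::nat. real k * t \<le> x} \<le> x \<and>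
         Max {real k * t | k::nat. real k * t \<le> x} \<ge> x - t \<and>
         Max {real k * t | k::nat. real k * t \<le> x} \<ge> 0"
proof -
  define S where "S = {real k * t | k::nat. real k * t \<le> x}"
  define k0 where "k0 = nat \<lfloor>x / t\<rfloor>"
  have sub: "S \<subseteq> (\<lambda>k. real k * t) ` {..k0}"
  proof
    fix y assume "y \<in> S"
    then obtain k where k: "y = real k * t" "real k * t \<le> x" unfolding S_def by blast
    have "real k \<le> x / t" using k t by (simp add: pos_le_divide_eq)
    hence "k \<le> k0" unfolding k0_def by linarith
    thus "y \<in> (\<lambda>k. real k * t) ` {..k0}" using k by auto
  qed
  have fin: "finite S" using sub finite_surj by blast
  have r: "real k0 = of_int \<lfloor>x / t\<rfloor>" unfolding k0_def using x t by simp
  have "real k0 \<le> x / t" using r by linarith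
  hence k0le: "real k0 * t \<le> x" using t by (simp add: pos_le_divide_eq)
  have "x / t < real k0 + 1" using r by linarith
  hence k0gt: "x - t < real k0 * t" using t by (simp add: pos_divide_less_eq algebra_simps)
  have k0S: "real k0 * t \<in> S" unfolding S_def using k0le by blast
  have "Max S \<in> S" using fin k0S Max_in by blast
  hence "Max S \<le> x" unfolding S_def by auto
  moreover have "Max S \<ge> real k0 * t" using fin k0S by simp
  moreover have "real k0 * t \<ge> 0" using t by simp
  ultimately show ?thesis unfolding S_def[symmetric] using k0gt by linarith
qed

theorem lemma4:
  fixes n :: nat and M :: "'m set" and v :: "nat \<Rightarrow> 'm \<Rightarrow> real"
    and g :: "nat \<Rightarrow> nat \<Rightarrow> 'm" and A :: "nat \<Rightarrow> 'm set" and \<epsilon> :: real and K :: nat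
  assumes finM: "finite M"
    and vnonneg: "\<And>i x. i < n \<Longrightarrow> x \<in> M \<Longrightarrow> v i x \<ge> 0"
    and eps: "\<epsilon> > 0"
    and Kdef: "K = nat \<lceil>3 * real (card M) * real n / \<epsilon>\<rceil>"
    and alloc: "is_allocation n M A"
    and gA: "\<And>i j. i < n \<Longrightarrow> j < n \<Longrightarrow> j \<noteq> i \<Longrightarrow> g j i \<in> A j"
    and EF: "\<And>i j. i < n \<Longrightarrow> j < n \<Longrightarrow> i \<noteq> j \<Longrightarrow>
               sum (vbar n M v g K i) (Inl ` A i \<union> {Inr i})
                 \<ge> sum (vbar n M v g K i) (Inl ` A j \<union> {Inr j})"
  shows "(\<forall>i<n. \<forall>j<n. i \<noteq> j \<longrightarrow>
            sum (v i) (A i) \<ge> (1 - \<epsilon>) * sum (v i) (A j - {g j i}))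
         \<and> approx_EF1 n v (1 - \<epsilon>) A"
proof -
  have sub: "\<And>k. k<n \<Longrightarrow> A k \<subseteq> M" and un: "(\<Union>k<n. A k) = M"
    and disj: "\<And>k l. k<n \<Longrightarrow> l<n \<Longrightarrow> k\<noteq>l \<Longrightarrow> A k \<inter> A l = {}"
    using alloc unfolding is_allocation_def by auto
  have main: "sum (v i) (A i) \<ge> (1 - \<epsilon>) * sum (v i) (A j - {g j i})"
    if ij: "i<n" "j<n" "i\<noteq>j" for i j
  proof -
    define w where "w = vbar n M v g K i"
    define Y where "Y = Ygoods n g i"
    define t where "t = tau n M v g K i"
    define V where "V = sum (v i) (M - Y)"
    define m where "m = card M"
    define X where "X = sum (v i) (A j - {g j i})"
    define a where "a = sum (v i) (A i)"
    define c where "c = real m * t"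
    have gj: "g j i \<in> A j" using gA ij by auto
    have mpos: "m > 0" unfolding m_def using gj sub[OF ij(2)] finM
      by (metis card_gt_0_iff empty_iff subsetD)
    have npos: "n > 0" using ij by auto
    have Kge: "real K \<ge> 3 * real m * real n / \<epsilon>"
    proof -
      define x where "x = 3 * real m * real n / \<epsilon>"
      have x0: "x \<ge> 0" unfolding x_def using eps by simp
      have c0: "0 \<le> \<lceil>x\<rceil>" using x0 by simp
      have "real K = of_int \<lceil>x\<rceil>" unfolding Kdef x_def m_def
        using c0 unfolding x_def m_def by (simp only: of_nat_nat)
      moreover have "x \<le> of_int \<lceil>x\<rceil>" by (rule le_of_int_ceiling)
      ultimately show ?thesis unfolding x_def by simp
    qed
    have "3 * real m * real n / \<epsilon> > 0" using mpos npos eps by simp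
    hence Kpos: "real K > 0" using Kge by linarith
    have Vnn: "V \<ge> 0" unfolding V_def by (rule sum_nonneg) (use vnonneg ij in auto)
    have t_eq: "t = V / real K" unfolding t_def V_def Y_def tau_def by simp
    have tnn: "t \<ge> 0" using t_eq Vnn Kpos by simp
    have wInl: "w (Inl y) = (if y \<in> Y then 0 else if t = 0 then 0
                  else Max {real k * t | k :: nat. real k * t \<le> v i y})" for y
      unfolding w_def vbar_def Let_def t_def Y_def by simp
    have wInr: "w (Inr k) = (if k = i then real m * t else 0)" for k
      unfolding w_def vbar_def Let_def t_def m_def by simp
    have F1: "0 \<le> w (Inl y) \<and> w (Inl y) \<le> v i y" if y: "y \<in> M" for y
    proof -
      have vy: "v i y \<ge> 0" using vnonneg ij y by auto
      show ?thesis
      proof (cases "y \<in> Y \<or> t = 0")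
        case True thus ?thesis using wInl vy by auto
      next
        case False
        hence "t > 0" using tnn by auto
        thus ?thesis using max_bounds[of t "v i y"] vy False wInl[of y] by auto
      qed
    qed
    have F2: "w (Inl y) \<ge> v i y - t" if y: "y \<in> M - Y" for y
    proof -
      have vy: "v i y \<ge> 0" using vnonneg ij y by auto
      show ?thesis
      proof (cases "t = 0")
        case True
        hence "V = 0" using t_eq Kpos by simp
        moreover have "v i y \<le> V" unfolding V_def
          by (rule member_le_sum) (use y vnonneg ij finM in auto)
        ultimately show ?thesis using F1[of y] y True by auto
      next
        case False
        hence "t > 0" using tnn by auto
        thus ?thesis using max_bounds[of t "v i y"] vy False wInl[of y] y by auto
      qed
    qed
    have split: "sum w (Inl ` S \<union> {Inr k}) = sum (\<lambda>y. w (Inl y)) S + w (Inr k)"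
      if "finite S" for S k
    proof -
      have "sum w (Inl ` S \<union> {Inr k}) = sum w (Inl ` S) + sum w {Inr k}"
        by (rule sum.union_disjoint) (use that in auto)
      also have "sum w (Inl ` S) = sum (\<lambda>y. w (Inl y)) S"
        by (subst sum.reindex) (auto simp: inj_on_def)
      finally show ?thesis by simp
    qed
    have up: "sum (\<lambda>y. w (Inl y)) S \<le> sum (v i) S" if "S \<subseteq> M" for S
      by (rule sum_mono) (use F1 that in auto)
    have low: "sum (\<lambda>y. w (Inl y)) S \<ge> sum (v i) (S - Y) - c" if S: "S \<subseteq> M" for S
    proof -
      have finS: "finite S" using S finM finite_subset by blast
      have "sum (\<lambda>y. w (Inl y)) (S - Y) \<le> sum (\<lambda>y. w (Inl y)) S"
        by (rule sum_mono2) (use finS F1 S in auto)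
      moreover have "sum (\<lambda>y. v i y - t) (S - Y) \<le> sum (\<lambda>y. w (Inl y)) (S - Y)"
        by (rule sum_mono) (use F2 S in auto)
      moreover have "sum (\<lambda>y. v i y - t) (S - Y) = sum (v i) (S - Y) - real (card (S - Y)) * t"
        by (simp add: sum_subtractf)
      moreover have "card (S - Y) \<le> m" unfolding m_def
        by (rule card_mono) (use finM S in auto)
      hence "real (card (S - Y)) * t \<le> c" unfolding c_def using tnn
        by (simp add: mult_right_mono)
      ultimately show ?thesis by linarith
    qed
    have AjY: "A j - Y = A j - {g j i}"
    proof
      show "A j - Y \<subseteq> A j - {g j i}" unfolding Y_def Ygoods_def using ij by auto
      show "A j - {g j i} \<subseteq> A j - Y"
      proof
        fix y assume y: "y \<in> A j - {g j i}"
        show "y \<in> A j - Y"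
        proof (rule ccontr)
          assume "y \<notin> A j - Y"
          then obtain k where k: "y = g k i" "k < n" "k \<noteq> i" using y unfolding Y_def Ygoods_def by auto
          have "g k i \<in> A k" using gA k ij by auto
          moreover have "k \<noteq> j" using k y by auto
          ultimately show False using disj[of k j] k ij y by auto
        qed
      qed
    qed
    have finA: "finite (A k)" if "k < n" for k using sub[OF that] finM finite_subset by blast
    have ci: "c = sum w {Inr i}" using wInr c_def by simp
    have c0: "c \<ge> 0" unfolding c_def using tnn by simp
    have wAi: "sum (\<lambda>y. w (Inl y)) (A i) \<le> a" unfolding a_def using up sub ij by auto
    have pair0: "sum (\<lambda>y. w (Inl y)) (A k) \<le> sum (\<lambda>y. w (Inl y)) (A i) + c"
      if k: "k < n" for k
    proof (cases "k = i")
      case True thus ?thesis using c0 by simp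
    next
      case False
      have "sum w (Inl ` A i \<union> {Inr i}) \<ge> sum w (Inl ` A k \<union> {Inr k})"
        using EF[of i k] ij k False unfolding w_def by auto
      thus ?thesis using split[OF finA[OF ij(1)], of i] split[OF finA[OF k], of k] wInr False c_def
        by auto
    qed
    have pair: "a \<ge> X - 2 * c"
    proof -
      have "sum (\<lambda>y. w (Inl y)) (A j) \<ge> X - c"
        using low[OF sub[OF ij(2)]] AjY unfolding X_def by simp
      thus ?thesis using pair0[OF ij(2)] wAi by linarith
    qed
    have "sum (\<lambda>y. w (Inl y)) M = (\<Sum>k<n. sum (\<lambda>y. w (Inl y)) (A k))"
      unfolding un[symmetric] by (rule sum.UNION_disjoint) (use finA disj in auto)
    also have "\<dots> \<le> (\<Sum>k<n. sum (\<lambda>y. w (Inl y)) (A i) + c)"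
      by (rule sum_mono) (use pair0 in auto)
    also have "\<dots> = real n * (sum (\<lambda>y. w (Inl y)) (A i) + c)" by simp
    also have "\<dots> \<le> real n * (a + c)" using wAi by (simp add: mult_left_mono)
    finally have tot0: "sum (\<lambda>y. w (Inl y)) M \<le> real n * (a + c)" .
    have tot: "real n * (a + c) \<ge> V - c" using tot0 low[of M] unfolding V_def by simp
    have cb: "c * (3 * real n) \<le> \<epsilon> * V"
    proof -
      have "\<epsilon> * real K \<ge> 3 * real m * real n" using Kge eps by (simp add: field_simps)
      hence "V * (3 * real m * real n) \<le> V * (\<epsilon> * real K)" using Vnn by (simp add: mult_left_mono)
      hence "(real m * V) * (3 * real n) \<le> (\<epsilon> * V) * real K" by (simp add: algebra_simps)
      hence "(real m * V) * (3 * real n) / real K \<le> \<epsilon> * V" using Kpos by (simp add: pos_divide_le_eq)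
      moreover have "c = real m * V / real K" unfolding c_def t_eq by simp
      ultimately show ?thesis by (simp add: field_simps)
    qed
    have XV: "X \<le> V" unfolding X_def V_def AjY[symmetric]
      by (rule sum_mono2) (use finM sub ij vnonneg in auto)
    have X0: "X \<ge> 0" unfolding X_def by (rule sum_nonneg) (use sub ij vnonneg in auto)
    have a0: "a \<ge> 0" unfolding a_def by (rule sum_nonneg) (use sub ij vnonneg in auto)
    define u where "u = V / real n"
    have Vu: "V = real n * u" unfolding u_def using npos by simp
    have nge1: "real n \<ge> 1" using npos by simp
    have cu: "c \<le> \<epsilon> * u / 3" using cb Vu npos by (simp add: field_simps)
    have au: "a \<ge> u - 2 * c"
    proof -
      have "real n * (u - c) = V - real n * c" using Vu by (simp add: algebra_simps)
      also have "\<dots> \<le> V - c" using c0 nge1 mult_right_mono[of 1 "real n" c] by simp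
      finally have "real n * (a + c) \<ge> real n * (u - c)" using tot by linarith
      thus ?thesis using npos by (simp add: mult_le_cancel_left)
    qed
    have "(1 - \<epsilon>) * X \<le> a"
    proof (cases "\<epsilon> \<ge> 1")
      case True
      hence "(1 - \<epsilon>) * X \<le> 0" using X0 by (simp add: mult_nonpos_nonneg)
      thus ?thesis using a0 by linarith
    next
      case False
      show ?thesis
      proof (cases "\<epsilon> * X \<ge> 2 * c")
        case True thus ?thesis using pair by (simp add: algebra_simps)
      next
        case F2: False
        hence "\<epsilon> * X < \<epsilon> * (2 * u / 3)" using cu by linarith
        hence "X < 2 * u / 3" using eps by (simp add: mult_less_cancel_left)
        hence "(1 - \<epsilon>) * X \<le> (1 - \<epsilon>) * (2 * u / 3)" using False
          by (intro mult_left_mono) auto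
        moreover have "u \<ge> 0" unfolding u_def using Vnn by simp
        moreover have "\<epsilon> * u \<ge> 0" using eps \<open>u \<ge> 0\<close> by simp
        moreover have "(1 - \<epsilon>) * (2 * u / 3) = 2 * u / 3 - 2 * (\<epsilon> * u) / 3"
          by (simp add: field_simps)
        ultimately show ?thesis using au cu by linarith
      qed
    qed
    thus ?thesis unfolding a_def X_def .
  qed
  show ?thesis
  proof
    show "\<forall>i<n. \<forall>j<n. i \<noteq> j \<longrightarrow> sum (v i) (A i) \<ge> (1 - \<epsilon>) * sum (v i) (A j - {g j i})"
      using main by blast
    show "approx_EF1 n v (1 - \<epsilon>) A" unfolding approx_EF1_def
      using main gA by blast
  qed
qed

end
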